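(* Let $G$ be a graph whose vertex set is partitioned into layers $V_1\cup\dots\cup V_l$, each of at most $s$ vertices, such that there is no edge between $V_i$ and $V_j$ whenever $|i-j|>1$. Consider the elimination ordering obtained recursively as follows: if $l=1$, order $V_1$ arbitrarily; otherwise give the middle layer $V_{\lfloor l/2\rfloor}$ the highest numbers, and order the vertices of $V_1\cup\dots\cup V_{\lfloor l/2\rfloor-1}$ and of $V_{\lfloor l/2\rfloor+1}\cup\dots\cup V_l$ recursively (before the middle layer). Then Gaussian elimination of a symmetric matrix whose nonzero off-diagonal pattern is contained in the edges of $G$, performed in this order, has fill-in size $O(s^2 l)$ and multiplication count $O(s^{\omega}l)$.
   Context: $\omega$ denotes the matrix multiplication exponent, i.e. two $m\times m$ matrices can be multiplied (and an $m\times m$ matrix inverted) with $O(m^{\omega})$ arithmetic operations. The fill-in size is the number of nonzero entries of the resulting triangular factor; the multiplication count is the number of arithmetic operations of the elimination. *)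

theory Defs
  imports Complex_Main
begin

definition offdiag_pattern :: "(nat \<Rightarrow> nat \<Rightarrow> real) \<Rightarrow> nat \<Rightarrow> nat \<Rightarrow> bool" where
  "offdiag_pattern A x y \<longleftrightarrow> x \<noteq> y \<and> A x y \<noteq> 0"

text \<open>Nested-dissection ordering on the layers a..b of a layered vertex set
(layers L 1, ..., L l).  Otherwise the
middle layer m (the floor(k/2)-th layer of the k = b-a+1 layers) is numbered
last, preceded by recursive orderings of the layers before and after it.\<close>

inductive nd_order :: "(nat \<Rightarrow> nat set) \<Rightarrow> nat \<Rightarrow> nat \<Rightarrow> nat list \<Rightarrow> bool"
  for L :: "nat \<Rightarrow> nat set" where
  nd_empty: "b < a \<Longrightarrow> nd_order L a b []"
| nd_single: "distinct xs \<Longrightarrow> set xs = L a \<Longrightarrow> nd_order L a a xs"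
| nd_split: "a < b \<Longrightarrow> m = a + (b + 1 - a) div 2 - 1 \<Longrightarrow>
     nd_order L a (m - 1) ys \<Longrightarrow> nd_order L (m + 1) b zs \<Longrightarrow>
     distinct ws \<Longrightarrow> set ws = L m \<Longrightarrow> nd_order L a b (ys @ zs @ ws)"

text \<open>Symbolic Gaussian elimination (elimination game) in the order given by the
list: eliminating v records its neighbours among the not yet eliminated vertices
(the off-diagonal nonzeros of its column/row in the triangular factor) and makes
these neighbours pairwise adjacent (fill).\<close>

fun elim_steps :: "(nat \<Rightarrow> nat \<Rightarrow> bool) \<Rightarrow> nat list \<Rightarrow> (nat \<times> nat set) list" where
  "elim_steps E [] = []"
| "elim_steps E (v # vs) =
     (v, {w \<in> set vs. E v w}) #
     elim_steps (\<lambda>x y. E x y \<or> (x \<noteq> y \<and> x \<in> set vs \<and> y \<in> set vs \<and> E v x \<and> E v y)) vs"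

text \<open>Fill-in size: number of nonzero entries of the triangular factor
(diagonal entry plus the off-diagonal entries of each eliminated column).\<close>

definition fill_size :: "(nat \<Rightarrow> nat \<Rightarrow> bool) \<Rightarrow> nat list \<Rightarrow> nat" where
  "fill_size E xs = sum_list (map (\<lambda>(v, N). 1 + card N) (elim_steps E xs))"

definition higher_nbrs :: "(nat \<Rightarrow> nat \<Rightarrow> bool) \<Rightarrow> nat list \<Rightarrow> nat \<Rightarrow> nat set" where
  "higher_nbrs E xs v = \<Union> {N. (v, N) \<in> set (elim_steps E xs)}"

text \<open>Multiplication count of the block elimination, each layer being one
(contiguous) pivot block B, eliminated with fast matrix multiplication/inversion
on the block together with its later-numbered filled neighbourhood; cost of one
block step on d = |B \<union> N(B)| rows is d powr \<omega>.\<close>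

definition block_mult_count ::
  "real \<Rightarrow> (nat \<Rightarrow> nat \<Rightarrow> bool) \<Rightarrow> nat list \<Rightarrow> (nat \<Rightarrow> nat set) \<Rightarrow> nat \<Rightarrow> real" where
  "block_mult_count \<omega> E xs L l =
     (\<Sum>i = 1..l. real (card (L i \<union> (\<Union>v \<in> L i. higher_nbrs E xs v))) powr \<omega>)"

definition layered_graph ::
  "nat set \<Rightarrow> (nat \<Rightarrow> nat \<Rightarrow> bool) \<Rightarrow> (nat \<Rightarrow> nat set) \<Rightarrow> nat \<Rightarrow> nat \<Rightarrow> bool" where
  "layered_graph V E L l s \<longleftrightarrow>
     (\<forall>x y. E x y \<longrightarrow> x \<in> V \<and> y \<in> V \<and> x \<noteq> y \<and> E y x) \<and>
     (\<Union>i \<in> {1..l}. L i) = V \<and>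
     (\<forall>i \<in> {1..l}. \<forall>j \<in> {1..l}. i \<noteq> j \<longrightarrow> L i \<inter> L j = {}) \<and>
     (\<forall>i \<in> {1..l}. finite (L i) \<and> card (L i) \<le> s) \<and>
     (\<forall>i \<in> {1..l}. \<forall>j \<in> {1..l}. \<forall>x \<in> L i. \<forall>y \<in> L j.
        E x y \<longrightarrow> (i \<le> j + 1 \<and> j \<le> i + 1))"

end

theory Submission
  imports Defs
begin

inductive dwalk :: "(nat \<Rightarrow> nat \<Rightarrow> bool) \<Rightarrow> nat set \<Rightarrow> nat \<Rightarrow> nat \<Rightarrow> bool"
  for G :: "nat \<Rightarrow> nat \<Rightarrow> bool" and D :: "nat set" where
  w1: "G x y \<Longrightarrow> dwalk G D x y"
| w2: "dwalk G D x z \<Longrightarrow> z \<in> D \<Longrightarrow> dwalk G D z y \<Longrightarrow> dwalk G D x y"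

lemma dwalk_sym:
  assumes "\<forall>a b. G a b \<longrightarrow> G b a"
  shows "dwalk G D x y \<Longrightarrow> dwalk G D y x"
  by (induction rule: dwalk.induct) (auto intro: dwalk.intros assms[rule_format])

lemma dwalk_mono:
  "dwalk G D x y \<Longrightarrow> D \<subseteq> D' \<Longrightarrow> dwalk G D' x y"
  by (induction rule: dwalk.induct) (auto intro: dwalk.intros)

lemma elim_len: "length (elim_steps E vs) = length vs"
  by (induction vs arbitrary: E) auto

lemma elim_fst: "map fst (elim_steps E vs) = vs"
  by (induction vs arbitrary: E) auto

lemma elim_walk:
  assumes sym: "\<forall>a b. G a b \<longrightarrow> G b a"
  shows "\<forall>x y. Ec x y \<longrightarrow> dwalk G D x y \<Longrightarrow> k < length vs \<Longrightarrow>
    snd (elim_steps Ec vs ! k) \<subseteq> {w \<in> set (drop (Suc k) vs). dwalk G (D \<union> set (take k vs)) (vs!k) w}"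
proof (induction vs arbitrary: Ec D k)
  case Nil
  then show ?case by simp
next
  case (Cons v vs)
  show ?case
  proof (cases k)
    case 0
    then show ?thesis using Cons.prems by auto
  next
    case (Suc k')
    define Ec' where "Ec' = (\<lambda>x y. Ec x y \<or> (x \<noteq> y \<and> x \<in> set vs \<and> y \<in> set vs \<and> Ec v x \<and> Ec v y))"
    have inv: "\<forall>x y. Ec' x y \<longrightarrow> dwalk G (insert v D) x y"
    proof (intro allI impI)
      fix x y assume "Ec' x y"
      then consider "Ec x y" | "Ec v x" "Ec v y" unfolding Ec'_def by blast
      then show "dwalk G (insert v D) x y"
      proof cases
        case 1 then show ?thesis using Cons.prems(1) dwalk_mono by blast
      next
        case 2
        then have a: "dwalk G D x v" using Cons.prems(1) dwalk_sym[OF sym] by blast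
        have b: "dwalk G D v y" using 2 Cons.prems(1) by blast
        show ?thesis using dwalk.w2[OF dwalk_mono[OF a] _ dwalk_mono[OF b]] by blast
      qed
    qed
    have "k' < length vs" using Cons.prems(2) Suc by simp
    from Cons.IH[OF inv this]
    have "snd (elim_steps Ec' vs ! k') \<subseteq> {w \<in> set (drop (Suc k') vs). dwalk G (insert v D \<union> set (take k' vs)) (vs!k') w}" .
    then show ?thesis using Suc by (simp add: Ec'_def)
  qed
qed

definition lay :: "(nat \<Rightarrow> nat set) \<Rightarrow> nat \<Rightarrow> nat set \<Rightarrow> nat set" where
  "lay L l S = (\<Union>i\<in>S \<inter> {1..l}. L i)"

lemma walk_bound:
  assumes lg: "layered_graph V E L l s" and GE: "\<forall>x y. G x y \<longrightarrow> E x y"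
    and Dd: "D \<inter> lay L l {a'-1, b'+1} = {}"
  shows "dwalk G D x y \<Longrightarrow> x \<in> lay L l {a'..b'} \<Longrightarrow> y \<in> lay L l {a'-1..b'+1}"
proof (induction rule: dwalk.induct)
  case (w1 x y)
  then obtain p where p: "p \<in> {a'..b'}" "p \<in> {1..l}" "x \<in> L p" unfolding lay_def by auto
  have "E x y" using w1 GE by blast
  then have "y \<in> V" using lg unfolding layered_graph_def by blast
  then obtain q where q: "q \<in> {1..l}" "y \<in> L q" using lg unfolding layered_graph_def by blast
  have "p \<le> q + 1 \<and> q \<le> p + 1" using lg p q \<open>E x y\<close> unfolding layered_graph_def by blast
  then show ?case using p q unfolding lay_def by auto
next
  case (w2 x z y)
  then have "z \<in> lay L l {a'-1..b'+1}" by blast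
  then obtain q where q: "q \<in> {a'-1..b'+1}" "q \<in> {1..l}" "z \<in> L q" unfolding lay_def by auto
  have "q \<noteq> a' - 1"
  proof
    assume "q = a' - 1"
    then have "z \<in> lay L l {a'-1, b'+1}" using q unfolding lay_def by blast
    then show False using Dd w2.hyps(2) by blast
  qed
  have "q \<noteq> b' + 1"
  proof
    assume "q = b' + 1"
    then have "z \<in> lay L l {a'-1, b'+1}" using q unfolding lay_def by blast
    then show False using Dd w2.hyps(2) by blast
  qed
  have "q \<in> {a'..b'}" using q \<open>q \<noteq> a' - 1\<close> \<open>q \<noteq> b' + 1\<close> by auto
  then have "z \<in> lay L l {a'..b'}" using q unfolding lay_def by blast
  then show ?case using w2.IH(2) by blast
qed


lemma uniqL:
  assumes disj: "\<forall>i\<in>{1..l}. \<forall>j\<in>{1..l}. i \<noteq> j \<longrightarrow> L i \<inter> L j = {}"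
  shows "x \<in> L i \<Longrightarrow> x \<in> L j \<Longrightarrow> i \<in> {1..l} \<Longrightarrow> j \<in> {1..l} \<Longrightarrow> i = j"
  using disj by blast

lemma nd_static:
  assumes disj: "\<forall>i\<in>{1..l}. \<forall>j\<in>{1..l}. i \<noteq> j \<longrightarrow> L i \<inter> L j = {}"
  shows "nd_order L a b xs \<Longrightarrow> 1 \<le> a \<Longrightarrow> b \<le> l \<Longrightarrow>
    distinct xs \<and> set xs = (\<Union>j\<in>{a..b}. L j) \<and>
    (\<forall>i\<in>{a..b}. \<exists>a' b'. a \<le> a' \<and> a' \<le> i \<and> i \<le> b' \<and> b' \<le> b \<and>
      (\<forall>k<length xs. xs!k \<in> L i \<longrightarrow>
         (\<forall>j\<in>{a'..b'}. j \<noteq> i \<longrightarrow> L j \<subseteq> set (take k xs)) \<and>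
         (a < a' \<longrightarrow> L (a'-1) \<inter> set (take k xs) = {}) \<and>
         (b' < b \<longrightarrow> L (b'+1) \<inter> set (take k xs) = {})))"
proof (induction rule: nd_order.induct)
  case (nd_empty b a)
  then show ?case by auto
next
  case (nd_single xs a)
  have "\<forall>i\<in>{a..a}. \<exists>a' b'. a \<le> a' \<and> a' \<le> i \<and> i \<le> b' \<and> b' \<le> a \<and>
      (\<forall>k<length xs. xs!k \<in> L i \<longrightarrow>
         (\<forall>j\<in>{a'..b'}. j \<noteq> i \<longrightarrow> L j \<subseteq> set (take k xs)) \<and>
         (a < a' \<longrightarrow> L (a'-1) \<inter> set (take k xs) = {}) \<and>
         (b' < a \<longrightarrow> L (b'+1) \<inter> set (take k xs) = {}))"
  proof
    fix i assume "i \<in> {a..a}"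
    then have "i = a" by simp
    then show "\<exists>a' b'. a \<le> a' \<and> a' \<le> i \<and> i \<le> b' \<and> b' \<le> a \<and>
      (\<forall>k<length xs. xs!k \<in> L i \<longrightarrow>
         (\<forall>j\<in>{a'..b'}. j \<noteq> i \<longrightarrow> L j \<subseteq> set (take k xs)) \<and>
         (a < a' \<longrightarrow> L (a'-1) \<inter> set (take k xs) = {}) \<and>
         (b' < a \<longrightarrow> L (b'+1) \<inter> set (take k xs) = {}))"
      by (intro exI[of _ a]) auto
  qed
  then show ?case using nd_single by simp
next
  case (nd_split a b m ys zs ws)
  have ma: "a \<le> m" "m < b" using nd_split.hyps(1,2) by auto
  have bl: "b \<le> l" "1 \<le> a" using nd_split.prems by auto
  have IHy: "distinct ys \<and> set ys = (\<Union>j\<in>{a..m-1}. L j) \<and>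
    (\<forall>i\<in>{a..m-1}. \<exists>a' b'. a \<le> a' \<and> a' \<le> i \<and> i \<le> b' \<and> b' \<le> m-1 \<and>
      (\<forall>k<length ys. ys!k \<in> L i \<longrightarrow>
         (\<forall>j\<in>{a'..b'}. j \<noteq> i \<longrightarrow> L j \<subseteq> set (take k ys)) \<and>
         (a < a' \<longrightarrow> L (a'-1) \<inter> set (take k ys) = {}) \<and>
         (b' < m-1 \<longrightarrow> L (b'+1) \<inter> set (take k ys) = {})))"
    using nd_split.IH(1) bl ma by auto
  have IHz: "distinct zs \<and> set zs = (\<Union>j\<in>{m+1..b}. L j) \<and>
    (\<forall>i\<in>{m+1..b}. \<exists>a' b'. m+1 \<le> a' \<and> a' \<le> i \<and> i \<le> b' \<and> b' \<le> b \<and>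
      (\<forall>k<length zs. zs!k \<in> L i \<longrightarrow>
         (\<forall>j\<in>{a'..b'}. j \<noteq> i \<longrightarrow> L j \<subseteq> set (take k zs)) \<and>
         (m+1 < a' \<longrightarrow> L (a'-1) \<inter> set (take k zs) = {}) \<and>
         (b' < b \<longrightarrow> L (b'+1) \<inter> set (take k zs) = {})))"
    using nd_split.IH(2) bl ma by auto
  have sY: "set ys = (\<Union>j\<in>{a..m-1}. L j)" and sZ: "set zs = (\<Union>j\<in>{m+1..b}. L j)"
    and sW: "set ws = L m" using IHy IHz nd_split.hyps by auto
  have inY: "x \<in> set ys \<Longrightarrow> \<exists>j. j \<in> {a..m-1} \<and> x \<in> L j" for x using sY by auto
  have inZ: "x \<in> set zs \<Longrightarrow> \<exists>j. j \<in> {m+1..b} \<and> x \<in> L j" for x using sZ by auto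
  have U: "\<And>x i j. x \<in> L i \<Longrightarrow> x \<in> L j \<Longrightarrow> i \<in> {a..b} \<Longrightarrow> j \<in> {a..b} \<Longrightarrow> i = j"
  proof -
    fix x i j assume "x \<in> L i" "x \<in> L j" "i \<in> {a..b}" "j \<in> {a..b}"
    then show "i = j" using uniqL[OF disj, of x i j] bl by auto
  qed
  have dYZ: "set ys \<inter> set zs = {}"
  proof (rule ccontr)
    assume "set ys \<inter> set zs \<noteq> {}"
    then obtain x where "x \<in> set ys" "x \<in> set zs" by blast
    then obtain i j where "i \<in> {a..m-1}" "x \<in> L i" "j \<in> {m+1..b}" "x \<in> L j" using inY inZ by blast
    moreover have "i \<in> {a..b}" "j \<in> {a..b}" using calculation ma ma by auto
    moreover have "i = j" using calculation U[of x i j] ma by blast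
    ultimately show False using  ma bl by auto
  qed
  have dYW: "set ys \<inter> L m = {}"
  proof (rule ccontr)
    assume "set ys \<inter> L m \<noteq> {}"
    then obtain x where "x \<in> set ys" "x \<in> L m" by blast
    then obtain i where "i \<in> {a..m-1}" "x \<in> L i" using inY by blast
    moreover have "i \<in> {a..b}" "m \<in> {a..b}" using calculation \<open>x \<in> L m\<close> ma ma by auto
    moreover have "i = m" using calculation U[of x i m] \<open>x \<in> L m\<close> ma by blast
    ultimately show False using  \<open>x \<in> L m\<close> ma bl by auto
  qed
  have dZW: "set zs \<inter> L m = {}"
  proof (rule ccontr)
    assume "set zs \<inter> L m \<noteq> {}"
    then obtain x where "x \<in> set zs" "x \<in> L m" by blast
    then obtain i where "i \<in> {m+1..b}" "x \<in> L i" using inZ by blast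
    moreover have "i \<in> {a..b}" "m \<in> {a..b}" using calculation \<open>x \<in> L m\<close> ma ma by auto
    moreover have "i = m" using calculation U[of x i m] \<open>x \<in> L m\<close> ma by blast
    ultimately show False using  \<open>x \<in> L m\<close> ma bl by auto
  qed
  have dist: "distinct (ys @ zs @ ws)" using IHy IHz nd_split.hyps dYZ dYW dZW sW by auto
  have "{a..b} = {a..m-1} \<union> {m} \<union> {m+1..b}" using ma bl by auto
  have sX: "set (ys @ zs @ ws) = (\<Union>j\<in>{a..b}. L j)" using sY sZ sW
  proof -
    have "(\<Union>j\<in>{a..b}. L j) = (\<Union>j\<in>{a..m-1}. L j) \<union> L m \<union> (\<Union>j\<in>{m+1..b}. L j)"
      unfolding \<open>{a..b} = {a..m-1} \<union> {m} \<union> {m+1..b}\<close> by blast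
    then show ?thesis using sY sZ sW by auto
  qed
  let ?xs = "ys @ zs @ ws"
  have main: "\<exists>a' b'. a \<le> a' \<and> a' \<le> i \<and> i \<le> b' \<and> b' \<le> b \<and>
      (\<forall>k<length ?xs. ?xs!k \<in> L i \<longrightarrow>
         (\<forall>j\<in>{a'..b'}. j \<noteq> i \<longrightarrow> L j \<subseteq> set (take k ?xs)) \<and>
         (a < a' \<longrightarrow> L (a'-1) \<inter> set (take k ?xs) = {}) \<and>
         (b' < b \<longrightarrow> L (b'+1) \<inter> set (take k ?xs) = {}))" if i: "i \<in> {a..b}" for i
  proof -
    consider "i < m" | "i = m" | "m < i" by linarith
    then show ?thesis
    proof cases
      case 1
      then have "i \<in> {a..m-1}" using i by auto
      then obtain a' b' where ab: "a \<le> a'" "a' \<le> i" "i \<le> b'" "b' \<le> m-1" and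
        P: "\<forall>k<length ys. ys!k \<in> L i \<longrightarrow>
         (\<forall>j\<in>{a'..b'}. j \<noteq> i \<longrightarrow> L j \<subseteq> set (take k ys)) \<and>
         (a < a' \<longrightarrow> L (a'-1) \<inter> set (take k ys) = {}) \<and>
         (b' < m-1 \<longrightarrow> L (b'+1) \<inter> set (take k ys) = {})"
        using bspec[OF conjunct2[OF conjunct2[OF IHy]] \<open>i \<in> {a..m-1}\<close>] by (elim exE conjE) blast
      show ?thesis
      proof (rule exI[of _ a'], rule exI[of _ b'], intro conjI allI impI)
        show "a \<le> a'" "a' \<le> i" "i \<le> b'" using ab by auto
        show "b' \<le> b" using ab ma by auto
        fix k assume k: "k < length ?xs" "?xs ! k \<in> L i"
        have kl: "k < length ys"
        proof (rule ccontr)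
          assume "\<not> k < length ys"
          then have "?xs ! k \<in> set zs \<union> set ws" using k(1)
            by (auto simp: nth_append)
          then have xz: "?xs ! k \<in> set zs \<union> L m" using sW by simp
          have "\<exists>j. j \<in> {m..b} \<and> ?xs ! k \<in> L j"
          proof (cases "?xs ! k \<in> set zs")
            case True
            then obtain j where "j \<in> {m+1..b}" "?xs ! k \<in> L j" using inZ by blast
            then show ?thesis by (intro exI[of _ j]) auto
          next
            case False
            then have "?xs ! k \<in> L m" using xz by blast
            then show ?thesis using ma by (intro exI[of _ m]) auto
          qed
          then obtain j where "j \<in> {m..b}" "?xs ! k \<in> L j" by blast
          moreover have "i \<in> {a..b}" "j \<in> {a..b}" using calculation k(2) i 1 ma by auto
          moreover have "i = j" using calculation U[of "?xs!k" i j] k(2) i 1 by blast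
          ultimately show False using  k(2) i 1 bl by auto
        qed
        then have e1: "?xs ! k = ys ! k" "take k ?xs = take k ys" by (auto simp: nth_append)
        have Pk: "(\<forall>j\<in>{a'..b'}. j \<noteq> i \<longrightarrow> L j \<subseteq> set (take k ys)) \<and>
         (a < a' \<longrightarrow> L (a'-1) \<inter> set (take k ys) = {}) \<and>
         (b' < m-1 \<longrightarrow> L (b'+1) \<inter> set (take k ys) = {})"
        proof -
          have "ys ! k \<in> L i" using k(2) e1 by simp
          then show ?thesis using P kl by blast
        qed
        show "\<forall>j\<in>{a'..b'}. j \<noteq> i \<longrightarrow> L j \<subseteq> set (take k ?xs)" using Pk e1 by auto
        show "L (a'-1) \<inter> set (take k ?xs) = {}" if "a < a'" using Pk e1 that by auto
        show "L (b'+1) \<inter> set (take k ?xs) = {}" if "b' < b"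
          proof (cases "b' < m - 1")
            case True then show ?thesis using Pk e1 by auto
          next
            case False
            then have "b' + 1 = m" using ab ma 1 by auto
            moreover have "set (take k ys) \<subseteq> set ys" by (rule set_take_subset)
            ultimately show ?thesis using dYW e1 by auto
          qed
      qed
    next
      case 2
      show ?thesis
      proof (rule exI[of _ a], rule exI[of _ b], intro conjI allI impI)
        show "a \<le> a" "a \<le> i" "i \<le> b" "b \<le> b" using i by auto
        fix k assume k: "k < length ?xs" "?xs ! k \<in> L i"
        have kl: "length ys + length zs \<le> k"
        proof (rule ccontr)
          assume "\<not> length ys + length zs \<le> k"
          then have "?xs ! k \<in> set ys \<union> set zs" 
            by (auto simp: nth_append)
          then show False using dYW dZW k(2) 2 by auto
        qed
        then have tk: "take k ?xs = ys @ zs @ take (k - length ys - length zs) ws"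
          by (auto simp: take_append)
        have sub: "set ys \<union> set zs \<subseteq> set (take k ?xs)" unfolding tk by auto
        show "\<forall>j\<in>{a..b}. j \<noteq> i \<longrightarrow> L j \<subseteq> set (take k ?xs)"
        proof (intro ballI impI)
          fix j assume "j \<in> {a..b}" "j \<noteq> i"
          then have "j \<in> {a..m-1} \<or> j \<in> {m+1..b}" using 2 by auto
          then have "L j \<subseteq> set ys \<union> set zs" using sY sZ by blast
          then show "L j \<subseteq> set (take k ?xs)" using sub by blast
        qed
        show "a < a \<Longrightarrow> L (a-1) \<inter> set (take k ?xs) = {}" by simp
        show "b < b \<Longrightarrow> L (b+1) \<inter> set (take k ?xs) = {}" by simp
      qed
    next
      case 3
      then have "i \<in> {m+1..b}" using i by auto
      then obtain a' b' where ab: "m+1 \<le> a'" "a' \<le> i" "i \<le> b'" "b' \<le> b" and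
        P: "\<forall>k<length zs. zs!k \<in> L i \<longrightarrow>
         (\<forall>j\<in>{a'..b'}. j \<noteq> i \<longrightarrow> L j \<subseteq> set (take k zs)) \<and>
         (m+1 < a' \<longrightarrow> L (a'-1) \<inter> set (take k zs) = {}) \<and>
         (b' < b \<longrightarrow> L (b'+1) \<inter> set (take k zs) = {})"
        using bspec[OF conjunct2[OF conjunct2[OF IHz]] \<open>i \<in> {m+1..b}\<close>] by (elim exE conjE) blast
      show ?thesis
      proof (rule exI[of _ a'], rule exI[of _ b'], intro conjI allI impI)
        show "a \<le> a'" "a' \<le> i" "i \<le> b'" "b' \<le> b" using ab ma by auto
        fix k assume k: "k < length ?xs" "?xs ! k \<in> L i"
        have kl1: "length ys \<le> k"
        proof (rule ccontr)
          assume "\<not> length ys \<le> k"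
          then have "?xs ! k \<in> set ys" by (auto simp: nth_append)
          then obtain j where "j \<in> {a..m-1}" "?xs ! k \<in> L j" using inY by blast
          moreover have "i \<in> {a..b}" "j \<in> {a..b}" using calculation k(2) i 3 ma by auto
          moreover have "i = j" using calculation U[of "?xs!k" i j] k(2) i 3 by blast
          ultimately show False using  k(2) i 3 bl by auto
        qed
        have kl2: "k < length ys + length zs"
        proof (rule ccontr)
          assume "\<not> k < length ys + length zs"
          then have "?xs ! k \<in> set ws" using k(1) by (auto simp: nth_append)
          then have "?xs ! k \<in> L m" using sW by simp
          moreover have "i \<in> {a..b}" "m \<in> {a..b}" using calculation k(2) i 3 ma ma by auto
          moreover have "i = m" using calculation U[of "?xs!k" i m] k(2) i 3 ma by blast
          ultimately show False using  k(2) i 3 ma bl by auto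
        qed
        define k' where "k' = k - length ys"
        have e1: "?xs ! k = zs ! k'" "take k ?xs = ys @ take k' zs" "k' < length zs"
          using kl1 kl2 unfolding k'_def by (auto simp: nth_append take_append)
        have Pk: "(\<forall>j\<in>{a'..b'}. j \<noteq> i \<longrightarrow> L j \<subseteq> set (take k' zs)) \<and>
         (m+1 < a' \<longrightarrow> L (a'-1) \<inter> set (take k' zs) = {}) \<and>
         (b' < b \<longrightarrow> L (b'+1) \<inter> set (take k' zs) = {})"
        proof -
          have "zs ! k' \<in> L i" using k(2) e1 by simp
          then show ?thesis using P e1(3) by blast
        qed
        have tz: "set (take k' zs) \<subseteq> set zs" by (rule set_take_subset)
        show "\<forall>j\<in>{a'..b'}. j \<noteq> i \<longrightarrow> L j \<subseteq> set (take k ?xs)" using Pk e1 by auto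
        have Yfar: "L j \<inter> set ys = {}" if "j \<in> {m..b}" for j
        proof (rule ccontr)
          assume "L j \<inter> set ys \<noteq> {}"
          then obtain x where "x \<in> L j" "x \<in> set ys" by blast
          then obtain j' where "j' \<in> {a..m-1}" "x \<in> L j'" using inY by blast
          moreover have "j \<in> {a..b}" "j' \<in> {a..b}" using calculation calculation that ma by auto
          moreover have "j = j'" using calculation U[of x j j'] \<open>x \<in> L j\<close> by blast
          ultimately show False using that ma bl by auto
        qed
        show "L (a'-1) \<inter> set (take k ?xs) = {}" if "a < a'"
        proof -
          have "a'-1 \<in> {m..b}" using ab by auto
          then have "L (a'-1) \<inter> set ys = {}" by (rule Yfar)
          moreover have "L (a'-1) \<inter> set (take k' zs) = {}"
          proof (cases "m + 1 < a'")
            case True then show ?thesis using Pk by auto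
          next
            case False
            then have "a' - 1 = m" using ab by auto
            then show ?thesis using dZW tz by auto
          qed
          ultimately show "L (a'-1) \<inter> set (take k ?xs) = {}" using e1 by auto
        qed
        show "L (b'+1) \<inter> set (take k ?xs) = {}" if "b' < b"
        proof -
          have "b'+1 \<in> {m..b}" using ab that by auto
          then have "L (b'+1) \<inter> set ys = {}" by (rule Yfar)
          then show "L (b'+1) \<inter> set (take k ?xs) = {}" using Pk e1 \<open>b' < b\<close> by auto
        qed
      qed
    qed
  qed
  show ?case using dist sX main by blast
qed


lemma card_lay:
  assumes "\<forall>i\<in>{1..l}. finite (L i) \<and> card (L i) \<le> s" "finite S"
  shows "card (lay L l S) \<le> card S * s" "finite (lay L l S)"
proof -
  have "card (lay L l S) \<le> (\<Sum>i\<in>S \<inter> {1..l}. card (L i))"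
    unfolding lay_def by (rule card_UN_le) (use assms in auto)
  also have "\<dots> \<le> (\<Sum>i\<in>S \<inter> {1..l}. s)" by (rule sum_mono) (use assms in auto)
  also have "\<dots> = card (S \<inter> {1..l}) * s" by simp
  also have "\<dots> \<le> card S * s" using assms(2) by (simp add: card_mono)
  finally show "card (lay L l S) \<le> card S * s" .
  show "finite (lay L l S)" unfolding lay_def using assms by auto
qed

lemma card3: "card {p, q, r::nat} \<le> 3"
  by (simp add: card_insert_if)

lemma layer_bound:
  assumes lg: "layered_graph V E L l s" and GE: "\<forall>x y. G x y \<longrightarrow> E x y"
    and sym: "\<forall>a b. G a b \<longrightarrow> G b a"
    and nd: "nd_order L 1 l xs" and i: "i \<in> {1..l}"
  shows "\<exists>T. finite T \<and> card T \<le> 3*s \<and> L i \<subseteq> T \<and>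
     (\<forall>k<length xs. xs!k \<in> L i \<longrightarrow> snd (elim_steps G xs ! k) \<subseteq> T)"
proof -
  have disj: "\<forall>i\<in>{1..l}. \<forall>j\<in>{1..l}. i \<noteq> j \<longrightarrow> L i \<inter> L j = {}"
    and fin: "\<forall>i\<in>{1..l}. finite (L i) \<and> card (L i) \<le> s"
    using lg unfolding layered_graph_def by blast+
  have st: "distinct xs \<and> set xs = (\<Union>j\<in>{1..l}. L j) \<and>
    (\<forall>i\<in>{1..l}. \<exists>a' b'. 1 \<le> a' \<and> a' \<le> i \<and> i \<le> b' \<and> b' \<le> l \<and>
      (\<forall>k<length xs. xs!k \<in> L i \<longrightarrow>
         (\<forall>j\<in>{a'..b'}. j \<noteq> i \<longrightarrow> L j \<subseteq> set (take k xs)) \<and>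
         (1 < a' \<longrightarrow> L (a'-1) \<inter> set (take k xs) = {}) \<and>
         (b' < l \<longrightarrow> L (b'+1) \<inter> set (take k xs) = {})))"
    using nd_static[OF disj nd] by simp
  then have dist: "distinct xs" by blast
  obtain a' b' where ab: "1 \<le> a'" "a' \<le> i" "i \<le> b'" "b' \<le> l" and
    P: "\<forall>k<length xs. xs!k \<in> L i \<longrightarrow>
         (\<forall>j\<in>{a'..b'}. j \<noteq> i \<longrightarrow> L j \<subseteq> set (take k xs)) \<and>
         (1 < a' \<longrightarrow> L (a'-1) \<inter> set (take k xs) = {}) \<and>
         (b' < l \<longrightarrow> L (b'+1) \<inter> set (take k xs) = {})"
    using bspec[OF conjunct2[OF conjunct2[OF st]] i] by (elim exE conjE) blast
  define T where "T = lay L l {a'-1, i, b'+1}"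
  have cT: "card T \<le> 3 * s"
  proof -
    have "card T \<le> card {a'-1, i, b'+1} * s" unfolding T_def by (rule card_lay(1)) (use fin in auto)
    also have "\<dots> \<le> 3 * s" using card3 by (rule mult_right_mono) simp
    finally show ?thesis .
  qed
  have fT: "finite T" unfolding T_def by (rule card_lay(2)) (use fin in auto)
  have LT: "L i \<subseteq> T" unfolding T_def lay_def using i by auto
  have main: "snd (elim_steps G xs ! k) \<subseteq> T" if k: "k < length xs" "xs!k \<in> L i" for k
  proof
    define D where "D = set (take k xs)"
    have Pk: "(\<forall>j\<in>{a'..b'}. j \<noteq> i \<longrightarrow> L j \<subseteq> D) \<and>
         (1 < a' \<longrightarrow> L (a'-1) \<inter> D = {}) \<and>
         (b' < l \<longrightarrow> L (b'+1) \<inter> D = {})" using P k unfolding D_def by blast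
    have Dd: "D \<inter> lay L l {a'-1, b'+1} = {}"
    proof -
      have "D \<inter> L j = {}" if "j \<in> {a'-1, b'+1} \<inter> {1..l}" for j
      proof -
        from that consider "j = a'-1" "1 \<le> a'-1" | "j = b'+1" "b'+1 \<le> l" by auto
        then show ?thesis
        proof cases
          case 1 then have "1 < a'" by simp
          then show ?thesis using Pk 1 by blast
        next
          case 2 then have "b' < l" by simp
          then show ?thesis using Pk 2 by blast
        qed
      qed
      then show ?thesis unfolding lay_def by blast
    qed
    have w0: "\<forall>x y. G x y \<longrightarrow> dwalk G {} x y" by (auto intro: dwalk.w1)
    have sub: "snd (elim_steps G xs ! k) \<subseteq> {w \<in> set (drop (Suc k) xs). dwalk G ({} \<union> set (take k xs)) (xs!k) w}"
      by (rule elim_walk[OF sym w0 k(1)])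
    fix w assume w: "w \<in> snd (elim_steps G xs ! k)"
    then have w1: "w \<in> set (drop (Suc k) xs)" and w2: "dwalk G D (xs!k) w"
      using sub unfolding D_def by auto
    have xk: "xs!k \<in> lay L l {a'..b'}" unfolding lay_def using k(2) ab i by auto
    have "w \<in> lay L l {a'-1..b'+1}" by (rule walk_bound[OF lg GE Dd w2 xk])
    then obtain j where j: "j \<in> {a'-1..b'+1}" "j \<in> {1..l}" "w \<in> L j" unfolding lay_def by auto
    have wD: "w \<notin> D" using w1 set_take_disj_set_drop_if_distinct[OF dist, of k "Suc k"] unfolding D_def by auto
    have "j \<in> {a'-1, i, b'+1}"
    proof (rule ccontr)
      assume "j \<notin> {a'-1, i, b'+1}"
      then have "j \<in> {a'..b'}" "j \<noteq> i" using j(1) by auto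
      then have "L j \<subseteq> D" using Pk by blast
      then show False using wD j(3) by blast
    qed
    then show "w \<in> T" unfolding T_def lay_def using j by blast
  qed
  show ?thesis using fT cT LT main by blast
qed


lemma common:
  assumes lg: "layered_graph V E L l s" and Asym: "\<forall>x y. A x y = A y x"
    and AE: "\<forall>x y. offdiag_pattern A x y \<longrightarrow> E x y" and nd: "nd_order L 1 l xs"
  shows "\<forall>i\<in>{1..l}. \<exists>T. finite T \<and> card T \<le> 3*s \<and> L i \<subseteq> T \<and>
     (\<forall>v N. v \<in> L i \<longrightarrow> (v, N) \<in> set (elim_steps (offdiag_pattern A) xs) \<longrightarrow> N \<subseteq> T)"
proof
  fix i assume i: "i \<in> {1..l}"
  have sym: "\<forall>a b. offdiag_pattern A a b \<longrightarrow> offdiag_pattern A b a"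
    using Asym unfolding offdiag_pattern_def by auto
  obtain T where T: "finite T" "card T \<le> 3*s" "L i \<subseteq> T"
    "\<forall>k<length xs. xs!k \<in> L i \<longrightarrow> snd (elim_steps (offdiag_pattern A) xs ! k) \<subseteq> T"
    using layer_bound[OF lg AE sym nd i] by blast
  show "\<exists>T. finite T \<and> card T \<le> 3*s \<and> L i \<subseteq> T \<and>
     (\<forall>v N. v \<in> L i \<longrightarrow> (v, N) \<in> set (elim_steps (offdiag_pattern A) xs) \<longrightarrow> N \<subseteq> T)"
  proof (rule exI[of _ T], intro conjI allI impI)
    show "finite T" "card T \<le> 3*s" "L i \<subseteq> T" using T by auto
    fix v N assume v: "v \<in> L i" and vN: "(v, N) \<in> set (elim_steps (offdiag_pattern A) xs)"
    then obtain k where k: "k < length (elim_steps (offdiag_pattern A) xs)"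
      "elim_steps (offdiag_pattern A) xs ! k = (v, N)" by (auto simp: in_set_conv_nth)
    have kl: "k < length xs" using k(1) by (simp add: elim_len)
    have "fst (elim_steps (offdiag_pattern A) xs ! k) = xs ! k"
      using nth_map[OF k(1), of fst] elim_fst[of "offdiag_pattern A" xs] by simp
    then have "xs ! k = v" using k(2) by simp
    then have "xs ! k \<in> L i" using v by simp
    then have "snd (elim_steps (offdiag_pattern A) xs ! k) \<subseteq> T" using T(4) kl by blast
    then show "N \<subseteq> T" using k(2) by simp
  qed
qed

lemma length_bound:
  assumes lg: "layered_graph V E L l s" and nd: "nd_order L 1 l xs"
  shows "length xs \<le> l * s" "set xs = (\<Union>j\<in>{1..l}. L j)"
proof -
  have disj: "\<forall>i\<in>{1..l}. \<forall>j\<in>{1..l}. i \<noteq> j \<longrightarrow> L i \<inter> L j = {}"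
    and fin: "\<forall>i\<in>{1..l}. finite (L i) \<and> card (L i) \<le> s"
    using lg unfolding layered_graph_def by blast+
  have st: "distinct xs" "set xs = (\<Union>j\<in>{1..l}. L j)"
    using nd_static[OF disj nd] by simp_all
  show "set xs = (\<Union>j\<in>{1..l}. L j)" by (rule st(2))
  have "length xs = card (set xs)" using st(1) by (simp add: distinct_card)
  also have "set xs = lay L l {1..l}" unfolding lay_def st(2) by simp
  also have "card (lay L l {1..l}) \<le> card {1..l} * s" by (rule card_lay(1)) (use fin in auto)
  finally show "length xs \<le> l * s" by simp
qed

theorem claim7p1:
  shows "(\<exists>C::real. \<forall>V E L l s A xs.
            layered_graph V E L l s \<and> 1 \<le> l \<and>
            (\<forall>x y. A x y = A y x) \<and>
            (\<forall>x y. offdiag_pattern A x y \<longrightarrow> E x y) \<and>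
            nd_order L 1 l xs \<longrightarrow>
            real (fill_size (offdiag_pattern A) xs) \<le> C * real s ^ 2 * real l)
       \<and> (\<forall>\<omega>::real. 2 \<le> \<omega> \<longrightarrow>
          (\<exists>C::real. \<forall>V E L l s A xs.
            layered_graph V E L l s \<and> 1 \<le> l \<and>
            (\<forall>x y. A x y = A y x) \<and>
            (\<forall>x y. offdiag_pattern A x y \<longrightarrow> E x y) \<and>
            nd_order L 1 l xs \<longrightarrow>
            block_mult_count \<omega> (offdiag_pattern A) xs L l \<le> C * real s powr \<omega> * real l))"
proof (intro conjI allI impI)
  show "\<exists>C::real. \<forall>V E L l s A xs.
            layered_graph V E L l s \<and> 1 \<le> l \<and>
            (\<forall>x y. A x y = A y x) \<and>
            (\<forall>x y. offdiag_pattern A x y \<longrightarrow> E x y) \<and>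
            nd_order L 1 l xs \<longrightarrow>
            real (fill_size (offdiag_pattern A) xs) \<le> C * real s ^ 2 * real l"
  proof (rule exI[of _ 4], intro allI impI, elim conjE)
    fix V E L l s A xs
    assume lg: "layered_graph V E L l s" and "1 \<le> l" and Asym: "\<forall>x y. A x y = A y x"
      and AE: "\<forall>x y. offdiag_pattern A x y \<longrightarrow> E x y" and nd: "nd_order L 1 l xs"
    note C = common[OF lg Asym AE nd]
    note LB = length_bound[OF lg nd]
    let ?st = "elim_steps (offdiag_pattern A) xs"
    have each: "(\<lambda>(v, N). 1 + card N) p \<le> 1 + 3 * s" if p: "p \<in> set ?st" for p
    proof -
      obtain v N where pv: "p = (v, N)" by (cases p)
      have "fst p \<in> fst ` set ?st" using p by (rule imageI)
      then have "v \<in> set (map fst ?st)" using pv by simp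
      then have "v \<in> set xs" by (simp add: elim_fst)
      then obtain i where i: "i \<in> {1..l}" "v \<in> L i" using LB(2) by auto
      obtain T where T: "finite T" "card T \<le> 3*s"
        "\<forall>v N. v \<in> L i \<longrightarrow> (v, N) \<in> set ?st \<longrightarrow> N \<subseteq> T"
        using bspec[OF C i(1)] by blast
      have "N \<subseteq> T" using T(3) i(2) p pv by blast
      then have "card N \<le> card T" using T(1) by (rule card_mono[rotated])
      then show ?thesis using T(2) pv by simp
    qed
    have "fill_size (offdiag_pattern A) xs \<le> (\<Sum>p\<leftarrow>?st. 1 + 3 * s)"
      unfolding fill_size_def by (rule sum_list_mono) (rule each)
    also have "\<dots> = length xs * (1 + 3 * s)" by (simp add: sum_list_triv elim_len)
    also have "\<dots> \<le> l * s * (1 + 3 * s)" using LB(1) by (rule mult_right_mono) simp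
    also have "\<dots> \<le> 4 * s ^ 2 * l"
    proof (cases s)
      case 0 then show ?thesis by simp
    next
      case (Suc t)
      then have h: "l * s \<le> l * s * s" by simp
      have e1: "l * s * (1 + 3 * s) = l * s + 3 * (l * s * s)" by (simp add: algebra_simps)
      have e2: "4 * s ^ 2 * l = l * s * s + 3 * (l * s * s)" by (simp add: algebra_simps power2_eq_square)
      show ?thesis unfolding e1 e2 using h by linarith
    qed
    finally have "real (fill_size (offdiag_pattern A) xs) \<le> real (4 * s ^ 2 * l)" by (rule of_nat_mono)
    then show "real (fill_size (offdiag_pattern A) xs) \<le> 4 * real s ^ 2 * real l" by simp
  qed
next
  fix \<omega> :: real assume om: "2 \<le> \<omega>"
  show "\<exists>C::real. \<forall>V E L l s A xs.
            layered_graph V E L l s \<and> 1 \<le> l \<and>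
            (\<forall>x y. A x y = A y x) \<and>
            (\<forall>x y. offdiag_pattern A x y \<longrightarrow> E x y) \<and>
            nd_order L 1 l xs \<longrightarrow>
            block_mult_count \<omega> (offdiag_pattern A) xs L l \<le> C * real s powr \<omega> * real l"
  proof (rule exI[of _ "3 powr \<omega>"], intro allI impI, elim conjE)
    fix V E L l s A xs
    assume lg: "layered_graph V E L l s" and "1 \<le> l" and Asym: "\<forall>x y. A x y = A y x"
      and AE: "\<forall>x y. offdiag_pattern A x y \<longrightarrow> E x y" and nd: "nd_order L 1 l xs"
    note C = common[OF lg Asym AE nd]
    let ?st = "elim_steps (offdiag_pattern A) xs"
    have each: "real (card (L i \<union> (\<Union>v \<in> L i. higher_nbrs (offdiag_pattern A) xs v))) powr \<omega>
        \<le> real (3 * s) powr \<omega>" if i: "i \<in> {1..l}" for i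
    proof -
      obtain T where T: "finite T" "card T \<le> 3*s" "L i \<subseteq> T"
        "\<forall>v N. v \<in> L i \<longrightarrow> (v, N) \<in> set ?st \<longrightarrow> N \<subseteq> T"
        using bspec[OF C i] by blast
      have "L i \<union> (\<Union>v \<in> L i. higher_nbrs (offdiag_pattern A) xs v) \<subseteq> T"
        using T(3,4) unfolding higher_nbrs_def by blast
      then have "card (L i \<union> (\<Union>v \<in> L i. higher_nbrs (offdiag_pattern A) xs v)) \<le> 3 * s"
      proof -
        have "card (L i \<union> (\<Union>v \<in> L i. higher_nbrs (offdiag_pattern A) xs v)) \<le> card T"
          by (rule card_mono[OF T(1)]) fact
        then show ?thesis using T(2) by linarith
      qed
      then have "real (card (L i \<union> (\<Union>v \<in> L i. higher_nbrs (offdiag_pattern A) xs v))) \<le> real (3 * s)"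
        by (rule of_nat_mono)
      then show ?thesis by (rule powr_mono2[rotated 2]) (use om in auto)
    qed
    have "block_mult_count \<omega> (offdiag_pattern A) xs L l \<le> (\<Sum>i = 1..l. real (3 * s) powr \<omega>)"
      unfolding block_mult_count_def by (rule sum_mono) (rule each)
    also have "\<dots> = real l * real (3 * s) powr \<omega>" by simp
    also have "real (3 * s) powr \<omega> = 3 powr \<omega> * real s powr \<omega>"
      by (simp add: powr_mult)
    finally show "block_mult_count \<omega> (offdiag_pattern A) xs L l \<le> 3 powr \<omega> * real s powr \<omega> * real l"
      by (simp add: algebra_simps)
  qed
qed

end
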